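(* Let $k$ be a commutative ring, $A$ an associative $k$-algebra and $Q=\sum_ix_i\otimes y_i\in C_{A\otimes_kA}(A)$. Define $\mathrm{R}=Q\tau\in\operatorname{End}_k(A\otimes_kA)$, i.e. $\mathrm{R}(a\otimes b)=Q\cdot(b\otimes a)=\sum_i x_ib\otimes y_ia$, where $\tau$ is the twist map. Then $\mathrm{R}$ is a solution of the quantum Yang–Baxter equation $$\mathrm{R}^{12}\circ\mathrm{R}^{13}\circ\mathrm{R}^{23}=\mathrm{R}^{23}\circ\mathrm{R}^{13}\circ\mathrm{R}^{12}.$$
   Context: $C_{A\otimes_kA}(A)=\{\sum_i x_i\otimes y_i\in A\otimes_kA:\ \sum_i ax_i\otimes y_i=\sum_i x_i\otimes y_ia\ \text{for all }a\in A\}$. For $\mathrm{R}\in\operatorname{End}_k(A\otimes_kA)$: $\mathrm{R}^{12}=\mathrm{R}\otimes\operatorname{Id}$, $\mathrm{R}^{23}=\operatorname{Id}\otimes\mathrm{R}$, $\mathrm{R}^{13}=(\operatorname{Id}\otimes\tau)(\mathrm{R}\otimes\operatorname{Id})(\operatorname{Id}\otimes\tau)$ in $\operatorname{End}_k(A\otimes_kA\otimes_kA)$, where $\tau(a\otimes b)=b\otimes a$. *)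

theory Defs
  imports Main HOL.Modules "HOL-Library.Function_Algebras"
begin

text \<open>
  Tensor products over a commutative ring k are modelled concretely:
  the free k-module on a set X is the type X => k restricted to finitely
  supported functions; A (x)_k A is the free module on A x A modulo the
  k-submodule generated by the bilinearity relations, and similarly for
  A (x)_k A (x)_k A on A x A x A.  Equality in the tensor product is thus
  "difference lies in the relation submodule".
\<close>

definition fsupp :: "('b \<Rightarrow> 'k::zero) \<Rightarrow> bool" where
  "fsupp f \<longleftrightarrow> finite {x. f x \<noteq> 0}"

definition delta :: "'b \<Rightarrow> 'b \<Rightarrow> 'k::zero_neq_one" where
  "delta x = (\<lambda>y. if y = x then 1 else 0)"

definition fscale :: "'k::times \<Rightarrow> ('b \<Rightarrow> 'k) \<Rightarrow> 'b \<Rightarrow> 'k" where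
  "fscale c u = (\<lambda>y. c * u y)"

definition lin_ext :: "('b \<Rightarrow> 'c \<Rightarrow> 'k::comm_ring_1) \<Rightarrow> ('b \<Rightarrow> 'k) \<Rightarrow> 'c \<Rightarrow> 'k" where
  "lin_ext g f = (\<Sum>x\<in>{x. f x \<noteq> 0}. fscale (f x) (g x))"

inductive_set tensor2_rel :: "('k::comm_ring_1 \<Rightarrow> 'a::ab_group_add \<Rightarrow> 'a) \<Rightarrow> ('a \<times> 'a \<Rightarrow> 'k) set"
  for sm where
  zero: "0 \<in> tensor2_rel sm"
| add: "u \<in> tensor2_rel sm \<Longrightarrow> v \<in> tensor2_rel sm \<Longrightarrow> u + v \<in> tensor2_rel sm"
| scale: "u \<in> tensor2_rel sm \<Longrightarrow> fscale c u \<in> tensor2_rel sm"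
| addL: "delta (a + a', b) - delta (a, b) - delta (a', b) \<in> tensor2_rel sm"
| addR: "delta (a, b + b') - delta (a, b) - delta (a, b') \<in> tensor2_rel sm"
| smulL: "delta (sm c a, b) - fscale c (delta (a, b)) \<in> tensor2_rel sm"
| smulR: "delta (a, sm c b) - fscale c (delta (a, b)) \<in> tensor2_rel sm"

inductive_set tensor3_rel :: "('k::comm_ring_1 \<Rightarrow> 'a::ab_group_add \<Rightarrow> 'a) \<Rightarrow> ('a \<times> 'a \<times> 'a \<Rightarrow> 'k) set"
  for sm where
  zero: "0 \<in> tensor3_rel sm"
| add: "u \<in> tensor3_rel sm \<Longrightarrow> v \<in> tensor3_rel sm \<Longrightarrow> u + v \<in> tensor3_rel sm"
| scale: "u \<in> tensor3_rel sm \<Longrightarrow> fscale c u \<in> tensor3_rel sm"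
| add1: "delta (a + a', b, d) - delta (a, b, d) - delta (a', b, d) \<in> tensor3_rel sm"
| add2: "delta (a, b + b', d) - delta (a, b, d) - delta (a, b', d) \<in> tensor3_rel sm"
| add3: "delta (a, b, d + d') - delta (a, b, d) - delta (a, b, d') \<in> tensor3_rel sm"
| smul1: "delta (sm c a, b, d) - fscale c (delta (a, b, d)) \<in> tensor3_rel sm"
| smul2: "delta (a, sm c b, d) - fscale c (delta (a, b, d)) \<in> tensor3_rel sm"
| smul3: "delta (a, b, sm c d) - fscale c (delta (a, b, d)) \<in> tensor3_rel sm"

definition k_algebra :: "('k::comm_ring_1 \<Rightarrow> 'a::ring \<Rightarrow> 'a) \<Rightarrow> bool" where
  "k_algebra sm \<longleftrightarrow> module sm \<and>
     (\<forall>c a b. sm c (a * b) = sm c a * b) \<and> (\<forall>c a b. sm c (a * b) = a * sm c b)"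

text \<open>the element Q = sum_i x_i (x) y_i, given by the list of pairs (x_i, y_i)\<close>
definition tensor_elt :: "('a \<times> 'a) list \<Rightarrow> 'a \<times> 'a \<Rightarrow> 'k::comm_ring_1" where
  "tensor_elt Q = (\<Sum>(x, y)\<leftarrow>Q. delta (x, y))"

definition in_centralizer :: "('k::comm_ring_1 \<Rightarrow> 'a::ring \<Rightarrow> 'a) \<Rightarrow> ('a \<times> 'a) list \<Rightarrow> bool" where
  "in_centralizer sm Q \<longleftrightarrow>
     (\<forall>a. ((\<Sum>(x, y)\<leftarrow>Q. delta (a * x, y)) - (\<Sum>(x, y)\<leftarrow>Q. delta (x, y * a)) :: 'a \<times> 'a \<Rightarrow> 'k)
           \<in> tensor2_rel sm)"

definition Rmap :: "('a::ring \<times> 'a) list \<Rightarrow> ('a \<times> 'a \<Rightarrow> 'k::comm_ring_1) \<Rightarrow> 'a \<times> 'a \<Rightarrow> 'k" where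
  "Rmap Q = lin_ext (\<lambda>(a, b). (\<Sum>(x, y)\<leftarrow>Q. delta (x * b, y * a)))"

definition tau2 :: "('a \<times> 'a \<Rightarrow> 'k::comm_ring_1) \<Rightarrow> 'a \<times> 'a \<Rightarrow> 'k" where
  "tau2 = lin_ext (\<lambda>(a, b). delta (b, a))"

definition tensor_id_right :: "(('a \<times> 'a \<Rightarrow> 'k::comm_ring_1) \<Rightarrow> 'a \<times> 'a \<Rightarrow> 'k)
    \<Rightarrow> ('a \<times> 'a \<times> 'a \<Rightarrow> 'k) \<Rightarrow> 'a \<times> 'a \<times> 'a \<Rightarrow> 'k" where
  "tensor_id_right T = lin_ext (\<lambda>(a, b, c). lin_ext (\<lambda>(u, v). delta (u, v, c)) (T (delta (a, b))))"

definition tensor_id_left :: "(('a \<times> 'a \<Rightarrow> 'k::comm_ring_1) \<Rightarrow> 'a \<times> 'a \<Rightarrow> 'k)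
    \<Rightarrow> ('a \<times> 'a \<times> 'a \<Rightarrow> 'k) \<Rightarrow> 'a \<times> 'a \<times> 'a \<Rightarrow> 'k" where
  "tensor_id_left T = lin_ext (\<lambda>(a, b, c). lin_ext (\<lambda>(v, w). delta (a, v, w)) (T (delta (b, c))))"

definition R12 :: "(('a \<times> 'a \<Rightarrow> 'k::comm_ring_1) \<Rightarrow> 'a \<times> 'a \<Rightarrow> 'k)
    \<Rightarrow> ('a \<times> 'a \<times> 'a \<Rightarrow> 'k) \<Rightarrow> 'a \<times> 'a \<times> 'a \<Rightarrow> 'k" where
  "R12 R = tensor_id_right R"

definition R23 :: "(('a \<times> 'a \<Rightarrow> 'k::comm_ring_1) \<Rightarrow> 'a \<times> 'a \<Rightarrow> 'k)
    \<Rightarrow> ('a \<times> 'a \<times> 'a \<Rightarrow> 'k) \<Rightarrow> 'a \<times> 'a \<times> 'a \<Rightarrow> 'k" where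
  "R23 R = tensor_id_left R"

definition R13 :: "(('a \<times> 'a \<Rightarrow> 'k::comm_ring_1) \<Rightarrow> 'a \<times> 'a \<Rightarrow> 'k)
    \<Rightarrow> ('a \<times> 'a \<times> 'a \<Rightarrow> 'k) \<Rightarrow> 'a \<times> 'a \<times> 'a \<Rightarrow> 'k" where
  "R13 R = tensor_id_left tau2 \<circ> tensor_id_right R \<circ> tensor_id_left tau2"

end

theory Submission
  imports Defs
begin

declare plus_fun_apply[simp del] zero_fun_apply[simp del] times_fun_apply[simp del] one_fun_apply[simp del] minus_apply[simp del] uminus_apply[simp del]
lemmas fun_apps = plus_fun_apply zero_fun_apply minus_apply uminus_apply

lemma fscale_apply: "fscale c u y = c * u y"
  by (simp add: fscale_def)

lemma sum_fun_apply: "finite S \<Longrightarrow> (\<Sum>x\<in>S. (f x :: 'b \<Rightarrow> 'k::comm_monoid_add)) y = (\<Sum>x\<in>S. f x y)"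
  by (induction S rule: finite_induct) (auto simp: fun_apps)

lemma sum_fun_apply': "(\<Sum>x\<in>S. (f x :: 'b \<Rightarrow> 'k::comm_monoid_add)) y = (\<Sum>x\<in>S. f x y)"
  by (cases "finite S") (auto simp: sum_fun_apply fun_apps)

lemma fsupp_0 [simp]: "fsupp (0 :: 'b \<Rightarrow> 'k::zero)"
  by (simp add: fsupp_def fun_apps)

lemma fsupp_add [simp]: "fsupp u \<Longrightarrow> fsupp v \<Longrightarrow> fsupp (u + (v :: 'b \<Rightarrow> 'k::monoid_add))"
  unfolding fsupp_def
  by (rule finite_subset[of _ "{x. u x \<noteq> 0} \<union> {x. v x \<noteq> 0}"]) (auto simp: fun_apps)

lemma fsupp_minus [simp]: "fsupp u \<Longrightarrow> fsupp v \<Longrightarrow> fsupp (u - (v :: 'b \<Rightarrow> 'k::group_add))"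
  unfolding fsupp_def
  by (rule finite_subset[of _ "{x. u x \<noteq> 0} \<union> {x. v x \<noteq> 0}"]) (auto simp: fun_apps)

lemma fsupp_scale [simp]: "fsupp u \<Longrightarrow> fsupp (fscale c (u :: 'b \<Rightarrow> 'k::comm_ring_1))"
  unfolding fsupp_def
  by (rule finite_subset[of _ "{x. u x \<noteq> 0}"]) (auto simp: fscale_apply)

lemma fsupp_delta [simp]: "fsupp (delta x :: 'b \<Rightarrow> 'k::zero_neq_one)"
  unfolding fsupp_def delta_def
  by (rule finite_subset[of _ "{x}"]) auto

lemma fsupp_sum [simp]: "(\<And>i. i \<in> I \<Longrightarrow> fsupp (h i)) \<Longrightarrow> fsupp (\<Sum>i\<in>I. (h i :: 'b \<Rightarrow> 'k::comm_ring_1))"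
  by (induction I rule: infinite_finite_induct) auto

lemma fscale_0 [simp]: "fscale 0 u = (0 :: 'b \<Rightarrow> 'k::comm_ring_1)"
  by (simp add: fscale_def zero_fun_def)

lemma fscale_1 [simp]: "fscale 1 u = (u :: 'b \<Rightarrow> 'k::comm_ring_1)"
  by (simp add: fscale_def)

lemma fscale_add_left: "fscale (a + b) u = fscale a u + fscale b (u :: 'b \<Rightarrow> 'k::comm_ring_1)"
  by (rule ext) (simp add: algebra_simps fscale_apply fun_apps)

lemma fscale_add_right: "fscale a (u + v) = fscale a u + fscale a (v :: 'b \<Rightarrow> 'k::comm_ring_1)"
  by (rule ext) (simp add: algebra_simps fscale_apply fun_apps)

lemma fscale_mult: "fscale c (fscale d u) = fscale (c * d) (u :: 'b \<Rightarrow> 'k::comm_ring_1)"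
  by (rule ext) (simp add: algebra_simps fscale_apply fun_apps)

lemma fscale_0_right [simp]: "fscale c (0 :: 'b \<Rightarrow> 'k::comm_ring_1) = 0"
  by (simp add: fscale_def zero_fun_def)

lemma fscale_sum: "fscale c (\<Sum>i\<in>I. h i) = (\<Sum>i\<in>I. fscale c (h i :: 'b \<Rightarrow> 'k::comm_ring_1))"
  by (induction I rule: infinite_finite_induct) (simp_all add: fscale_add_right)

lemma lin_ext_eq:
  assumes "finite S" "{x. f x \<noteq> 0} \<subseteq> S"
  shows "lin_ext g f = (\<Sum>x\<in>S. fscale (f x) (g x))"
  unfolding lin_ext_def
  by (rule sum.mono_neutral_left) (use assms in auto)

lemma lin_ext_add:
  assumes "fsupp u" "fsupp v"
  shows "lin_ext g (u + v) = lin_ext g u + lin_ext g v"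
proof -
  let ?S = "{x. u x \<noteq> 0} \<union> {x. v x \<noteq> 0}"
  have f: "finite ?S" using assms by (simp add: fsupp_def)
  have "lin_ext g (u + v) = (\<Sum>x\<in>?S. fscale ((u+v) x) (g x))"
    by (rule lin_ext_eq[OF f]) (auto simp: fun_apps)
  also have "\<dots> = (\<Sum>x\<in>?S. fscale (u x) (g x)) + (\<Sum>x\<in>?S. fscale (v x) (g x))"
    by (simp add: fscale_add_left sum.distrib fun_apps)
  also have "\<dots> = lin_ext g u + lin_ext g v"
    by (simp add: lin_ext_eq[OF f])
  finally show ?thesis .
qed

lemma lin_ext_scale:
  assumes "fsupp u"
  shows "lin_ext g (fscale c u) = fscale c (lin_ext g u)"
proof -
  let ?S = "{x. u x \<noteq> 0}"
  have f: "finite ?S" using assms by (simp add: fsupp_def)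
  have "lin_ext g (fscale c u) = (\<Sum>x\<in>?S. fscale (fscale c u x) (g x))"
    by (rule lin_ext_eq[OF f]) (auto simp: fscale_apply)
  also have "\<dots> = fscale c (lin_ext g u)"
    by (simp add: lin_ext_eq[OF f] fscale_sum fscale_mult fscale_apply)
  finally show ?thesis .
qed

lemma lin_ext_zero [simp]: "lin_ext g 0 = 0"
  by (simp add: lin_ext_def fun_apps)

lemma lin_ext_minus:
  assumes "fsupp u" "fsupp v"
  shows "lin_ext g (u - v) = lin_ext g u - lin_ext g v"
proof -
  have "lin_ext g (u - v) + lin_ext g v = lin_ext g u"
    using lin_ext_add[of "u - v" v g] assms by simp
  then show ?thesis by (simp add: algebra_simps)
qed

lemma lin_ext_delta [simp]: "lin_ext g (delta x) = g x"
proof -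
  have "lin_ext g (delta x) = (\<Sum>y\<in>{x}. fscale (delta x y) (g y))"
    by (rule lin_ext_eq) (auto simp: delta_def)
  then show ?thesis by (simp add: delta_def)
qed

lemma lin_ext_sum:
  assumes "\<And>i. i \<in> I \<Longrightarrow> fsupp (h i)"
  shows "lin_ext g (\<Sum>i\<in>I. h i) = (\<Sum>i\<in>I. lin_ext g (h i))"
  using assms by (induction I rule: infinite_finite_induct) (auto simp: lin_ext_add)

lemma fsupp_lin_ext:
  assumes "\<And>x. fsupp (g x)"
  shows "fsupp (lin_ext g f)"
  unfolding lin_ext_def using assms by (intro fsupp_sum fsupp_scale) auto

lemma decomp:
  assumes "fsupp f"
  shows "lin_ext delta f = f"
proof
  fix y
  have "lin_ext delta f y = (\<Sum>x\<in>{x. f x \<noteq> 0}. f x * delta x y)"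
    by (simp add: lin_ext_def sum_fun_apply' fscale_apply)
  also have "\<dots> = (\<Sum>x\<in>{x. f x \<noteq> 0}. if x = y then f x else 0)"
    by (rule sum.cong) (auto simp: delta_def)
  also have "\<dots> = f y"
    using assms by (simp add: sum.delta fsupp_def)
  finally show "lin_ext delta f y = f y" .
qed

lemma sum_list_conv: "(\<Sum>(x, y)\<leftarrow>Q. f x y) = (\<Sum>i<length Q. f (fst (Q!i)) (snd (Q!i)))"
  by (simp add: sum_list_sum_nth atLeast0LessThan case_prod_beta)

lemma rel2_fsupp: "u \<in> tensor2_rel sm \<Longrightarrow> fsupp u"
  by (induction rule: tensor2_rel.induct) auto

lemma rel3_minus: "u \<in> tensor3_rel sm \<Longrightarrow> v \<in> tensor3_rel sm \<Longrightarrow> u - v \<in> tensor3_rel sm"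
proof -
  assume "u \<in> tensor3_rel sm" "v \<in> tensor3_rel sm"
  then have "u + fscale (-1) v \<in> tensor3_rel sm"
    by (intro tensor3_rel.add tensor3_rel.scale)
  moreover have "u + fscale (-1) v = u - v"
    by (rule ext) (simp add: fscale_apply fun_apps)
  ultimately show ?thesis by simp
qed

lemma rel3_sum: "(\<And>i. i \<in> I \<Longrightarrow> u i \<in> tensor3_rel sm) \<Longrightarrow> (\<Sum>i\<in>I. u i) \<in> tensor3_rel sm"
  by (induction I rule: infinite_finite_induct) (auto intro: tensor3_rel.intros)

lemma rel3_sum_diff: "(\<And>i. i \<in> I \<Longrightarrow> u i - v i \<in> tensor3_rel sm) \<Longrightarrow>
   (\<Sum>i\<in>I. u i) - (\<Sum>i\<in>I. v i) \<in> tensor3_rel sm"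
  by (simp add: sum_subtractf[symmetric] rel3_sum)

lemma rel3_trans: "u - v \<in> tensor3_rel sm \<Longrightarrow> v - w \<in> tensor3_rel sm \<Longrightarrow> u - w \<in> tensor3_rel sm"
  using tensor3_rel.add[of "u - v" sm "v - w"] by simp

lemma rel3_lin_ext: "(\<And>x. g x \<in> tensor3_rel sm) \<Longrightarrow> lin_ext g f \<in> tensor3_rel sm"
  unfolding lin_ext_def by (intro rel3_sum tensor3_rel.scale)

lemma rel_transfer:
  assumes addL: "\<And>p p' q. delta (F (p + p') q) - delta (F p q) - delta (F p' q) \<in> tensor3_rel sm"
    and addR: "\<And>p q q'. delta (F p (q + q')) - delta (F p q) - delta (F p q') \<in> tensor3_rel sm"
    and smulL: "\<And>c p q. delta (F (sm c p) q) - fscale c (delta (F p q)) \<in> tensor3_rel sm"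
    and smulR: "\<And>c p q. delta (F p (sm c q)) - fscale c (delta (F p q)) \<in> tensor3_rel sm"
    and u: "u \<in> tensor2_rel sm"
  shows "lin_ext (\<lambda>(p, q). delta (F p q)) u \<in> tensor3_rel sm"
  using u
proof (induction rule: tensor2_rel.induct)
  case zero
  then show ?case by (simp add: tensor3_rel.zero)
next
  case (add u v)
  then show ?case by (simp add: lin_ext_add rel2_fsupp tensor3_rel.add)
next
  case (scale u c)
  then show ?case by (simp add: lin_ext_scale rel2_fsupp tensor3_rel.scale)
next
  case (addL a a' b)
  then show ?case using assms(1) by (simp add: lin_ext_minus)
next
  case (addR a b b')
  then show ?case using assms(2) by (simp add: lin_ext_minus)
next
  case (smulL c a b)
  then show ?case using assms(3) by (simp add: lin_ext_minus lin_ext_scale)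
next
  case (smulR a c b)
  then show ?case using assms(4) by (simp add: lin_ext_minus lin_ext_scale)
qed

lemma kalg_L: "k_algebra sm \<Longrightarrow> sm c a * b = sm c (a * b)"
  unfolding k_algebra_def by metis

lemma kalg_R: "k_algebra sm \<Longrightarrow> a * sm c b = sm c (a * b)"
  unfolding k_algebra_def by metis

lemma transfer1:
  assumes "k_algebra sm" "u \<in> tensor2_rel sm"
  shows "lin_ext (\<lambda>(p, q). delta (C, p * m, q * a)) u \<in> tensor3_rel sm"
  by (rule rel_transfer[where F = "\<lambda>p q. (C, p * m, q * a)"])
     (simp_all add: assms(2) distrib_right kalg_L[OF assms(1)] tensor3_rel.add2 tensor3_rel.add3
         tensor3_rel.smul2 tensor3_rel.smul3)

lemma transfer2:
  assumes "k_algebra sm" "u \<in> tensor2_rel sm"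
  shows "lin_ext (\<lambda>(p, q). delta (p * c, x * (q * b), D)) u \<in> tensor3_rel sm"
  by (rule rel_transfer[where F = "\<lambda>p q. (p * c, x * (q * b), D)"])
     (simp_all add: assms(2) distrib_right distrib_left kalg_L[OF assms(1)] kalg_R[OF assms(1)]
        tensor3_rel.add1 tensor3_rel.add2 tensor3_rel.smul1 tensor3_rel.smul2)

definition lin :: "(('b \<Rightarrow> 'k::comm_ring_1) \<Rightarrow> ('c \<Rightarrow> 'k)) \<Rightarrow> bool" where
  "lin L \<longleftrightarrow> (\<forall>u v. fsupp u \<longrightarrow> fsupp v \<longrightarrow> L (u + v) = L u + L v) \<and>
     (\<forall>c u. fsupp u \<longrightarrow> L (fscale c u) = fscale c (L u)) \<and> (\<forall>u. fsupp u \<longrightarrow> fsupp (L u))"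

lemma lin_lin_ext: "(\<And>x. fsupp (g x)) \<Longrightarrow> lin (lin_ext g)"
  unfolding lin_def by (simp add: lin_ext_add lin_ext_scale fsupp_lin_ext)

lemma lin_comp: "lin L \<Longrightarrow> lin M \<Longrightarrow> lin (L \<circ> M)"
  unfolding lin_def by simp

lemma lin_zero: "lin L \<Longrightarrow> L 0 = 0"
proof -
  assume "lin L"
  then have h: "\<forall>u v. fsupp u \<longrightarrow> fsupp v \<longrightarrow> L (u + v) = L u + L v" unfolding lin_def by blast
  have "L (0 + 0) = L 0 + L 0" using h[rule_format, OF fsupp_0 fsupp_0] .
  then show ?thesis by simp
qed

lemma lin_fsupp: "lin L \<Longrightarrow> fsupp u \<Longrightarrow> fsupp (L u)"
  unfolding lin_def by simp

lemma lin_sum: "lin L \<Longrightarrow> (\<And>i. i \<in> I \<Longrightarrow> fsupp (h i)) \<Longrightarrow> L (\<Sum>i\<in>I. h i) = (\<Sum>i\<in>I. L (h i))"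
proof (induction I rule: infinite_finite_induct)
  case (insert x F)
  then show ?case unfolding lin_def by simp
qed (simp_all add: lin_zero)

lemma lin_diff: "lin L \<Longrightarrow> fsupp u \<Longrightarrow> fsupp v \<Longrightarrow> L (u - v) = L u - L v"
proof -
  assume a: "lin L" "fsupp u" "fsupp v"
  then have h: "\<forall>u v. fsupp u \<longrightarrow> fsupp v \<longrightarrow> L (u + v) = L u + L v" unfolding lin_def by blast
  have "L (u - v + v) = L (u - v) + L v" using h[rule_format, OF fsupp_minus[OF a(2,3)] a(3)] .
  then show ?thesis by (simp add: algebra_simps)
qed

lemma lin_lin_ext_comm:
  assumes "lin L" "\<And>x. fsupp (g x)"
  shows "L (lin_ext g f) = lin_ext (\<lambda>x. L (g x)) f"
  unfolding lin_ext_def using assms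
  by (simp add: lin_sum lin_def)

lemma fsupp_Rmap: "fsupp (Rmap Q (delta x))"
  by (simp add: Rmap_def case_prod_beta sum_list_conv)

lemma fsupp_Rmap_gen: "fsupp (Rmap Q u)"
  unfolding Rmap_def by (rule fsupp_lin_ext) (simp add: case_prod_beta sum_list_conv)

lemma lin_R12: "lin (R12 (Rmap Q))"
  unfolding R12_def tensor_id_right_def
  by (rule lin_lin_ext) (simp add: case_prod_beta fsupp_lin_ext)

lemma lin_R23: "lin (R23 (Rmap Q))"
  unfolding R23_def tensor_id_left_def
  by (rule lin_lin_ext) (simp add: case_prod_beta fsupp_lin_ext)

lemma lin_tl_tau: "lin (tensor_id_left tau2)"
  unfolding tensor_id_left_def
  by (rule lin_lin_ext) (simp add: case_prod_beta fsupp_lin_ext)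

lemma lin_R13: "lin (R13 (Rmap Q))"
  unfolding R13_def
  by (intro lin_comp lin_tl_tau) (unfold tensor_id_right_def, rule lin_lin_ext, simp add: case_prod_beta fsupp_lin_ext)

lemma Rmap_delta: "Rmap Q (delta (a, b)) = (\<Sum>i<length Q. delta (fst (Q!i) * b, snd (Q!i) * a))"
  by (simp add: Rmap_def sum_list_conv)

lemma R12_delta: "R12 (Rmap Q) (delta (a, b, c)) = (\<Sum>i<length Q. delta (fst (Q!i) * b, snd (Q!i) * a, c))"
  by (simp add: R12_def tensor_id_right_def Rmap_delta lin_ext_sum)

lemma R23_delta: "R23 (Rmap Q) (delta (a, b, c)) = (\<Sum>i<length Q. delta (a, fst (Q!i) * c, snd (Q!i) * b))"
  by (simp add: R23_def tensor_id_left_def Rmap_delta lin_ext_sum)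

lemma tl_tau_delta: "tensor_id_left tau2 (delta (a, b, c)) = delta (a, c, b)"
  by (simp add: tensor_id_left_def tau2_def)

lemma R13_delta: "R13 (Rmap Q) (delta (a, b, c)) = (\<Sum>i<length Q. delta (fst (Q!i) * c, b, snd (Q!i) * a))"
  by (simp add: R13_def tl_tau_delta tensor_id_right_def Rmap_delta lin_ext_sum lin_sum[OF lin_tl_tau])

lemma centr:
  assumes "in_centralizer sm Q"
  shows "(\<Sum>i<length Q. delta (z * fst (Q!i), snd (Q!i))) - (\<Sum>i<length Q. delta (fst (Q!i), snd (Q!i) * z))
     \<in> tensor2_rel sm"
  using assms unfolding in_centralizer_def by (simp add: sum_list_conv)

lemma LHS_delta:
  "(R12 (Rmap Q) \<circ> R13 (Rmap Q) \<circ> R23 (Rmap Q)) (delta (a, b, c)) =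
   (\<Sum>i<length Q. \<Sum>j<length Q. \<Sum>k<length Q.
      delta (fst (Q!k) * (fst (Q!i) * c), snd (Q!k) * (fst (Q!j) * (snd (Q!i) * b)), snd (Q!j) * a))"
  by (simp add: R23_delta lin_sum[OF lin_R13] R13_delta lin_sum[OF lin_R12] R12_delta mult.assoc)

lemma RHS_delta:
  "(R23 (Rmap Q) \<circ> R13 (Rmap Q) \<circ> R12 (Rmap Q)) (delta (a, b, c)) =
   (\<Sum>k<length Q. \<Sum>j<length Q. \<Sum>i<length Q.
      delta (fst (Q!j) * c, fst (Q!i) * (snd (Q!j) * (fst (Q!k) * b)), snd (Q!i) * (snd (Q!k) * a)))"
  by (simp add: R12_delta lin_sum[OF lin_R13] R13_delta lin_sum[OF lin_R23] R23_delta mult.assoc)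

lemma swap_in: "(\<Sum>i\<in>A. \<Sum>j\<in>B. \<Sum>k\<in>C. f i j k) = (\<Sum>i\<in>A. \<Sum>k\<in>C. \<Sum>j\<in>B. (f i j k :: 'z::comm_monoid_add))"
  by (rule sum.cong[OF refl], rule sum.swap)

lemma basis:
  fixes sm :: "'k::comm_ring_1 \<Rightarrow> 'a::ring \<Rightarrow> 'a"
  assumes alg: "k_algebra sm" and cen: "in_centralizer sm Q"
  shows "(R12 (Rmap Q) \<circ> R13 (Rmap Q) \<circ> R23 (Rmap Q)) (delta (a, b, c))
       - (R23 (Rmap Q) \<circ> R13 (Rmap Q) \<circ> R12 (Rmap Q)) (delta (a, b, c)) \<in> tensor3_rel sm"
proof -
  let ?I = "{..<length Q}"
  let ?X = "\<lambda>i. fst (Q!i)"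
  let ?Y = "\<lambda>i. snd (Q!i)"
  define T1 where "T1 i j k = (delta (?X k * (?X i * c), ?Y k * (?X j * (?Y i * b)), ?Y j * a) :: _ \<Rightarrow> 'k)" for i j k
  define T2 where "T2 i j k = (delta (?X k * (?X i * c), ?X j * (?Y i * b), ?Y j * (?Y k * a)) :: _ \<Rightarrow> 'k)" for i j k
  define T3 where "T3 i j k = (delta (?X i * c, ?X j * (?Y i * (?X k * b)), ?Y j * (?Y k * a)) :: _ \<Rightarrow> 'k)" for i j k
  have step1: "(\<Sum>j\<in>?I. T1 i j k) - (\<Sum>j\<in>?I. T2 i j k) \<in> tensor3_rel sm" for i k
  proof -
    have "lin_ext (\<lambda>(p, q). delta (?X k * (?X i * c), p * (?Y i * b), q * a))
      ((\<Sum>j<length Q. delta (?Y k * ?X j, ?Y j)) - (\<Sum>j<length Q. delta (?X j, ?Y j * ?Y k)))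
      \<in> tensor3_rel sm"
      by (rule transfer1[OF alg centr[OF cen]])
    then show ?thesis
      by (simp add: lin_ext_minus lin_ext_sum T1_def T2_def mult.assoc)
  qed
  have step2: "(\<Sum>i\<in>?I. T2 i j k) - (\<Sum>i\<in>?I. T3 i j k) \<in> tensor3_rel sm" for j k
  proof -
    have "lin_ext (\<lambda>(p, q). delta (p * c, ?X j * (q * b), ?Y j * (?Y k * a)))
      ((\<Sum>i<length Q. delta (?X k * ?X i, ?Y i)) - (\<Sum>i<length Q. delta (?X i, ?Y i * ?X k)))
      \<in> tensor3_rel sm"
      by (rule transfer2[OF alg centr[OF cen]])
    then show ?thesis
      by (simp add: lin_ext_minus lin_ext_sum T2_def T3_def mult.assoc)
  qed
  have A: "(\<Sum>i\<in>?I. \<Sum>k\<in>?I. \<Sum>j\<in>?I. T1 i j k) - (\<Sum>i\<in>?I. \<Sum>k\<in>?I. \<Sum>j\<in>?I. T2 i j k) \<in> tensor3_rel sm"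
    by (intro rel3_sum_diff step1)
  have B: "(\<Sum>j\<in>?I. \<Sum>k\<in>?I. \<Sum>i\<in>?I. T2 i j k) - (\<Sum>j\<in>?I. \<Sum>k\<in>?I. \<Sum>i\<in>?I. T3 i j k) \<in> tensor3_rel sm"
    by (intro rel3_sum_diff step2)
  have L: "(R12 (Rmap Q) \<circ> R13 (Rmap Q) \<circ> R23 (Rmap Q)) (delta (a, b, c)) = (\<Sum>i\<in>?I. \<Sum>k\<in>?I. \<Sum>j\<in>?I. T1 i j k)"
    unfolding LHS_delta T1_def by (rule swap_in)
  have M: "(\<Sum>i\<in>?I. \<Sum>k\<in>?I. \<Sum>j\<in>?I. T2 i j k) = (\<Sum>j\<in>?I. \<Sum>k\<in>?I. \<Sum>i\<in>?I. T2 i j k)"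
  proof -
    have "(\<Sum>i\<in>?I. \<Sum>k\<in>?I. \<Sum>j\<in>?I. T2 i j k) = (\<Sum>i\<in>?I. \<Sum>j\<in>?I. \<Sum>k\<in>?I. T2 i j k)"
      by (rule swap_in)
    also have "\<dots> = (\<Sum>j\<in>?I. \<Sum>i\<in>?I. \<Sum>k\<in>?I. T2 i j k)"
      by (rule sum.swap)
    also have "\<dots> = (\<Sum>j\<in>?I. \<Sum>k\<in>?I. \<Sum>i\<in>?I. T2 i j k)"
      by (rule swap_in)
    finally show ?thesis .
  qed
  have R: "(R23 (Rmap Q) \<circ> R13 (Rmap Q) \<circ> R12 (Rmap Q)) (delta (a, b, c)) = (\<Sum>j\<in>?I. \<Sum>k\<in>?I. \<Sum>i\<in>?I. T3 i j k)"
  proof -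
    have "(R23 (Rmap Q) \<circ> R13 (Rmap Q) \<circ> R12 (Rmap Q)) (delta (a, b, c)) = (\<Sum>k\<in>?I. \<Sum>i\<in>?I. \<Sum>j\<in>?I. T3 i j k)"
      unfolding RHS_delta T3_def by (rule refl)
    also have "\<dots> = (\<Sum>k\<in>?I. \<Sum>j\<in>?I. \<Sum>i\<in>?I. T3 i j k)"
      by (rule swap_in)
    also have "\<dots> = (\<Sum>j\<in>?I. \<Sum>k\<in>?I. \<Sum>i\<in>?I. T3 i j k)"
      by (rule sum.swap)
    finally show ?thesis .
  qed
  show ?thesis
    unfolding L R using rel3_trans[OF A[unfolded M] B] .
qed

lemma fscale_diff_right: "fscale a (u - v) = fscale a u - fscale a (v :: 'b \<Rightarrow> 'k::comm_ring_1)"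
  by (rule ext) (simp add: algebra_simps fscale_apply fun_apps)

lemma lin_ext_diff_fun: "lin_ext (\<lambda>x. g1 x - g2 x) f = lin_ext g1 f - lin_ext g2 f"
  unfolding lin_ext_def by (simp add: fscale_diff_right sum_subtractf)

theorem corollary25:
  fixes sm :: "'k::comm_ring_1 \<Rightarrow> 'a::ring \<Rightarrow> 'a"
    and Q :: "('a \<times> 'a) list"
  assumes "k_algebra sm"
    and "in_centralizer sm Q"
  shows "\<forall>f :: 'a \<times> 'a \<times> 'a \<Rightarrow> 'k. fsupp f \<longrightarrow>
           (R12 (Rmap Q) \<circ> R13 (Rmap Q) \<circ> R23 (Rmap Q)) f
             - (R23 (Rmap Q) \<circ> R13 (Rmap Q) \<circ> R12 (Rmap Q)) f \<in> tensor3_rel sm"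
proof (intro allI impI)
  fix f :: "'a \<times> 'a \<times> 'a \<Rightarrow> 'k"
  assume f: "fsupp f"
  let ?LHSM = "R12 (Rmap Q) \<circ> R13 (Rmap Q) \<circ> R23 (Rmap Q)"
  let ?RHSM = "R23 (Rmap Q) \<circ> R13 (Rmap Q) \<circ> R12 (Rmap Q)"
  have lL: "lin ?LHSM" by (intro lin_comp lin_R12 lin_R13 lin_R23)
  have lR: "lin ?RHSM" by (intro lin_comp lin_R12 lin_R13 lin_R23)
  have "?LHSM f - ?RHSM f = ?LHSM (lin_ext delta f) - ?RHSM (lin_ext delta f)"
    by (simp only: decomp[OF f])
  also have "\<dots> = lin_ext (\<lambda>x. ?LHSM (delta x)) f - lin_ext (\<lambda>x. ?RHSM (delta x)) f"
    by (simp only: lin_lin_ext_comm[OF lL fsupp_delta] lin_lin_ext_comm[OF lR fsupp_delta])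
  also have "\<dots> = lin_ext (\<lambda>x. ?LHSM (delta x) - ?RHSM (delta x)) f"
    by (rule lin_ext_diff_fun[symmetric])
  also have "\<dots> \<in> tensor3_rel sm"
  proof (rule rel3_lin_ext)
    fix x :: "'a \<times> 'a \<times> 'a"
    obtain a b c where "x = (a, b, c)" by (cases x) auto
    then show "?LHSM (delta x) - ?RHSM (delta x) \<in> tensor3_rel sm"
      using basis[OF assms] by simp
  qed
  finally show "?LHSM f - ?RHSM f \<in> tensor3_rel sm" .
qed

end
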